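(* Let $m<M$ be real numbers and let $X$ be a random variable taking values in $[m,M]$, either discrete (taking finitely many values $x_1,\dots,x_n\in[m,M]$ with probabilities $p_1,\dots,p_n$) or continuous (with probability density $f$ on $[m,M]$). Let $\mu_3$ be its third central moment. Then $$|\mu_3|\le\frac{(M-m)^3}{6\sqrt3}.$$
   Context: The mean is $\mu_1'=\sum_{i=1}^n p_i x_i$ (discrete case) or $\mu_1'=\int_m^M x f(x)\,dx$ (continuous case), where $\sum p_i=1$, resp. $\int_m^M f(x)\,dx=1$. The $r$-th central moment is $\mu_r=\sum_{i=1}^n p_i (x_i-\mu_1')^r$, resp. $\mu_r=\int_m^M (x-\mu_1')^r f(x)\,dx$. *)

theory Defs
  imports "HOL-Analysis.Analysis"
begin

definition disc_mean :: "nat \<Rightarrow> (nat \<Rightarrow> real) \<Rightarrow> (nat \<Rightarrow> real) \<Rightarrow> real" where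
  "disc_mean n p x = (\<Sum>i=1..n. p i * x i)"

definition disc_central_moment :: "nat \<Rightarrow> nat \<Rightarrow> (nat \<Rightarrow> real) \<Rightarrow> (nat \<Rightarrow> real) \<Rightarrow> real" where
  "disc_central_moment r n p x = (\<Sum>i=1..n. p i * (x i - disc_mean n p x) ^ r)"

definition cont_mean :: "real \<Rightarrow> real \<Rightarrow> (real \<Rightarrow> real) \<Rightarrow> real" where
  "cont_mean m M f = integral {m..M} (\<lambda>t. t * f t)"

definition cont_central_moment :: "nat \<Rightarrow> real \<Rightarrow> real \<Rightarrow> (real \<Rightarrow> real) \<Rightarrow> real" where
  "cont_central_moment r m M f = integral {m..M} (\<lambda>t. (t - cont_mean m M f) ^ r * f t)"

end

theory Submission
  imports Defs
begin


lemma poly_bound: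
  fixes d u :: real assumes "0 \<le> u" "u \<le> d/3"
  shows "(d - 3 * u) * d * u + 2 * u^3 \<le> d^3/(6 * sqrt 3)"
proof -
  define s where "s = sqrt 3"
  have s2: "s^2 = 3" by (simp add: s_def)
  have spos: "s > 0" by (simp add: s_def)
  define h where "h = u - d/2"
  define h0 where "h0 = -d/(2 * s)"
  have g: "(d - 3 * u) * d * u + 2 * u^3 = 2 * h^3 - d^2 * h/2" unfolding h_def by (simp add: field_simps power3_eq_cube power2_eq_square)
  have gh0: "2 * h0^3 - d^2 * h0/2 = d^3/(6 * s)"
    using spos s2 by (simp add: h0_def field_simps power3_eq_cube power2_eq_square)
  have fac: "2 * h^3 - d^2 * h/2 - (2 * h0^3 - d^2 * h0/2) = 2 * (h-h0)^2 * (h+2 * h0)"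
  proof -
    have "d^2 = 12 * h0^2" using s2 spos by (simp add: h0_def power2_eq_square field_simps)
    then show ?thesis by (simp add: power2_eq_square power3_eq_cube algebra_simps)
  qed
  have "d / s \<ge> 0" using assms spos by simp
  hence "h + 2 * h0 \<le> 0" using assms spos unfolding h_def h0_def by linarith
  hence "2 * (h-h0)^2 * (h+2 * h0) \<le> 0" by (simp add: mult_nonneg_nonpos)
  thus ?thesis using g gh0 fac unfolding s_def by linarith
qed

lemma upper0:
  fixes d u S T :: real
  assumes d: "0 < d" and u: "0 \<le> u" "u \<le> d" and S: "S \<le> d * u"
    and H: "\<And>t. T - (2 * t + d) * S + (t^2 + 2 * t * d) * u - t^2 * d \<le> 0"
  shows "T - 3 * u * S + 2 * u^3 \<le> d^3/(6 * sqrt 3)"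
proof (cases "u \<le> d/3")
  case True
  have "T \<le> d * S" using H[of 0] by simp
  hence "T - 3 * u * S + 2 * u^3 \<le> (d - 3 * u) * S + 2 * u^3" by (simp add: algebra_simps)
  also have "\<dots> \<le> (d - 3 * u) * (d * u) + 2 * u^3"
    using True S by (intro add_right_mono mult_left_mono) auto
  also have "\<dots> \<le> d^3/(6 * sqrt 3)" using poly_bound[OF u(1) True] by (simp add: mult.assoc)
  finally show ?thesis .
next
  case False
  define t where "t = (3 * u - d) / 2"
  have "T - 3 * u * S + 2 * u^3 \<le> (d - u)^3 / 4"
    using H[of t] unfolding t_def by (simp add: field_simps power2_eq_square power3_eq_cube)
  also have "\<dots> \<le> (2 * d / 3)^3 / 4"
    using False u by (intro divide_right_mono power_mono) auto
  also have "\<dots> = d^3 / (27/2)" by (simp add: power3_eq_cube field_simps)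
  also have "\<dots> \<le> d^3 / (6 * sqrt 3)"
  proof (rule divide_left_mono)
    have "sqrt 3 \<le> sqrt ((9/4)^2)" by (intro real_sqrt_le_mono) (simp add: power2_eq_square)
    thus "6 * sqrt 3 \<le> 27/2" by simp
  qed (use d in auto)
  finally show ?thesis .
qed

lemma moment_bound:
  fixes m M e1 e2 e3 :: real
  assumes mM: "m < M"
    and H1: "\<And>t. e3 - (2 * t + M) * e2 + (t^2 + 2 * t * M) * e1 - t^2 * M \<le> 0"
    and H2: "\<And>t. e3 - (2 * t + m) * e2 + (t^2 + 2 * t * m) * e1 - t^2 * m \<ge> 0"
    and H3: "e2 - (m + M) * e1 + m * M \<le> 0"
    and H4: "m \<le> e1" "e1 \<le> M"
  shows "\<bar>e3 - 3 * e1 * e2 + 2 * e1^3\<bar> \<le> (M - m)^3/(6 * sqrt 3)"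
proof -
  have up: "e3 - 3 * e1 * e2 + 2 * e1^3 \<le> (M - m)^3/(6 * sqrt 3)"
  proof -
    have "(e3 - 3 * m * e2 + 3 * m^2 * e1 - m^3) - 3 * (e1 - m) * (e2 - 2 * m * e1 + m^2) + 2 * (e1 - m)^3
          \<le> (M - m)^3/(6 * sqrt 3)"
    proof (rule upper0)
      show "e2 - 2 * m * e1 + m^2 \<le> (M - m) * (e1 - m)" using H3 by (simp add: algebra_simps power2_eq_square)
      fix t
      have "(e3 - 3 * m * e2 + 3 * m^2 * e1 - m^3) - (2 * t + (M - m)) * (e2 - 2 * m * e1 + m^2)
           + (t^2 + 2 * t * (M - m)) * (e1 - m) - t^2 * (M - m)
           = e3 - (2 * (m + t) + M) * e2 + ((m + t)^2 + 2 * (m + t) * M) * e1 - (m + t)^2 * M"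
        by (simp add: algebra_simps power2_eq_square power3_eq_cube)
      thus "(e3 - 3 * m * e2 + 3 * m^2 * e1 - m^3) - (2 * t + (M - m)) * (e2 - 2 * m * e1 + m^2)
           + (t^2 + 2 * t * (M - m)) * (e1 - m) - t^2 * (M - m) \<le> 0" using H1[of "m + t"] by linarith
    qed (use mM H4 in auto)
    moreover have "(e3 - 3 * m * e2 + 3 * m^2 * e1 - m^3) - 3 * (e1 - m) * (e2 - 2 * m * e1 + m^2) + 2 * (e1 - m)^3
        = e3 - 3 * e1 * e2 + 2 * e1^3" by (simp add: algebra_simps power2_eq_square power3_eq_cube)
    ultimately show ?thesis by simp
  qed
  have lo: "-(e3 - 3 * e1 * e2 + 2 * e1^3) \<le> (M - m)^3/(6 * sqrt 3)"
  proof -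
    have "(-(e3 - 3 * M * e2 + 3 * M^2 * e1 - M^3)) - 3 * (M - e1) * (e2 - 2 * M * e1 + M^2) + 2 * (M - e1)^3
          \<le> (M - m)^3/(6 * sqrt 3)"
    proof (rule upper0)
      show "e2 - 2 * M * e1 + M^2 \<le> (M - m) * (M - e1)" using H3 by (simp add: algebra_simps power2_eq_square)
      fix t
      have "(-(e3 - 3 * M * e2 + 3 * M^2 * e1 - M^3)) - (2 * t + (M - m)) * (e2 - 2 * M * e1 + M^2)
           + (t^2 + 2 * t * (M - m)) * (M - e1) - t^2 * (M - m)
           = -(e3 - (2 * (M - t) + m) * e2 + ((M - t)^2 + 2 * (M - t) * m) * e1 - (M - t)^2 * m)"
        by (simp add: algebra_simps power2_eq_square power3_eq_cube)
      thus "(-(e3 - 3 * M * e2 + 3 * M^2 * e1 - M^3)) - (2 * t + (M - m)) * (e2 - 2 * M * e1 + M^2)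
           + (t^2 + 2 * t * (M - m)) * (M - e1) - t^2 * (M - m) \<le> 0" using H2[of "M - t"] by linarith
    qed (use mM H4 in auto)
    moreover have "(-(e3 - 3 * M * e2 + 3 * M^2 * e1 - M^3)) - 3 * (M - e1) * (e2 - 2 * M * e1 + M^2) + 2 * (M - e1)^3
        = -(e3 - 3 * e1 * e2 + 2 * e1^3)" by (simp add: algebra_simps power2_eq_square power3_eq_cube)
    ultimately show ?thesis by simp
  qed
  show ?thesis using up lo by linarith
qed

lemma disc_lin:
  fixes p x :: "nat \<Rightarrow> real"
  shows "(\<Sum>i=1..n. p i * (a * x i^3 + b * x i^2 + c * x i + k)) =
     a * (\<Sum>i=1..n. p i * x i^3) + b * (\<Sum>i=1..n. p i * x i^2) + c * (\<Sum>i=1..n. p i * x i) + k * (\<Sum>i=1..n. p i)"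
  by (simp add: sum.distrib sum_distrib_left algebra_simps)

lemma cont_integrable:
  fixes f g :: "real \<Rightarrow> real"
  assumes f: "f integrable_on {m..M}" "\<forall>t\<in>{m..M}. 0 \<le> f t" and g: "continuous_on {m..M} g"
  shows "(\<lambda>t. g t * f t) integrable_on {m..M}"
proof -
  have "f absolutely_integrable_on {m..M}"
    using f by (intro nonnegative_absolutely_integrable) auto
  moreover have "g \<in> borel_measurable (lebesgue_on {m..M})"
    using g by (intro continuous_imp_measurable_on_sets_lebesgue) auto
  moreover have "bounded (g ` {m..M})"
    using g by (intro compact_imp_bounded compact_continuous_image) auto
  ultimately have "(\<lambda>t. g t * f t) absolutely_integrable_on {m..M}"
    by (intro absolutely_integrable_bounded_measurable_product_real) auto
  thus ?thesis using absolutely_integrable_on_def by blast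
qed

lemma cont_lin:
  fixes f :: "real \<Rightarrow> real"
  assumes f: "f integrable_on {m..M}" "\<forall>t\<in>{m..M}. 0 \<le> f t"
  shows "integral {m..M} (\<lambda>t. (a * t^3 + b * t^2 + c * t + k) * f t) =
     a * integral {m..M} (\<lambda>t. t^3 * f t) + b * integral {m..M} (\<lambda>t. t^2 * f t)
     + c * integral {m..M} (\<lambda>t. t * f t) + k * integral {m..M} f"
proof -
  have i3: "(\<lambda>t. t^3 * f t) integrable_on {m..M}" by (rule cont_integrable[OF f]) (intro continuous_intros)
  have i2: "(\<lambda>t. t^2 * f t) integrable_on {m..M}" by (rule cont_integrable[OF f]) (intro continuous_intros)
  have i1: "(\<lambda>t. t * f t) integrable_on {m..M}" by (rule cont_integrable[OF f]) (intro continuous_intros)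
  have eq: "(\<lambda>t. (a * t^3 + b * t^2 + c * t + k) * f t) =
      (\<lambda>t. a * (t^3 * f t) + b * (t^2 * f t) + c * (t * f t) + k * f t)"
    by (rule ext) (simp add: algebra_simps)
  show ?thesis unfolding eq
    using i1 i2 i3 f(1)
    by (simp add: integral_add integrable_add integral_mult_right integrable_on_mult_right)
qed

lemma abstract_bound:
  fixes m M e1 e2 e3 :: real
  assumes mM: "m < M"
    and pos: "\<And>a b c k. (\<And>t. m \<le> t \<Longrightarrow> t \<le> M \<Longrightarrow> 0 \<le> a * t^3 + b * t^2 + c * t + k)
               \<Longrightarrow> 0 \<le> a * e3 + b * e2 + c * e1 + k"
  shows "\<bar>e3 - 3 * e1 * e2 + 2 * e1^3\<bar> \<le> (M - m)^3/(6 * sqrt 3)"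
proof (rule moment_bound[OF mM])
  fix t
  have "0 \<le> (-1) * e3 + (2 * t + M) * e2 + (-(t^2 + 2 * t * M)) * e1 + t^2 * M"
  proof (rule pos)
    fix y assume "m \<le> y" "y \<le> M"
    hence "0 \<le> (y - t)^2 * (M - y)" by simp
    also have "\<dots> = (-1) * y^3 + (2 * t + M) * y^2 + (-(t^2 + 2 * t * M)) * y + t^2 * M"
      by (simp add: algebra_simps power2_eq_square power3_eq_cube)
    finally show "0 \<le> (-1) * y^3 + (2 * t + M) * y^2 + (-(t^2 + 2 * t * M)) * y + t^2 * M" .
  qed
  thus "e3 - (2 * t + M) * e2 + (t^2 + 2 * t * M) * e1 - t^2 * M \<le> 0" by linarith
  have "0 \<le> 1 * e3 + (-(2 * t + m)) * e2 + (t^2 + 2 * t * m) * e1 + (-(t^2 * m))"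
  proof (rule pos)
    fix y assume "m \<le> y" "y \<le> M"
    hence "0 \<le> (y - t)^2 * (y - m)" by simp
    also have "\<dots> = 1 * y^3 + (-(2 * t + m)) * y^2 + (t^2 + 2 * t * m) * y + (-(t^2 * m))"
      by (simp add: algebra_simps power2_eq_square power3_eq_cube)
    finally show "0 \<le> 1 * y^3 + (-(2 * t + m)) * y^2 + (t^2 + 2 * t * m) * y + (-(t^2 * m))" .
  qed
  thus "e3 - (2 * t + m) * e2 + (t^2 + 2 * t * m) * e1 - t^2 * m \<ge> 0" by linarith
next
  have "0 \<le> 0 * e3 + (-1) * e2 + (m + M) * e1 + (-(m * M))"
  proof (rule pos)
    fix y assume "m \<le> y" "y \<le> M"
    hence "0 \<le> (y - m) * (M - y)" by simp
    also have "\<dots> = 0 * y^3 + (-1) * y^2 + (m + M) * y + (-(m * M))"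
      by (simp add: algebra_simps power2_eq_square)
    finally show "0 \<le> 0 * y^3 + (-1) * y^2 + (m + M) * y + (-(m * M))" .
  qed
  thus "e2 - (m + M) * e1 + m * M \<le> 0" by linarith
next
  have "0 \<le> 0 * e3 + 0 * e2 + 1 * e1 + (- m)"
    by (rule pos) simp
  thus "m \<le> e1" by simp
next
  have "0 \<le> 0 * e3 + 0 * e2 + (-1) * e1 + M"
    by (rule pos) simp
  thus "e1 \<le> M" by simp
qed


theorem theorem2p3:
  fixes m M :: real
  assumes "m < M"
  shows "(\<forall>(n::nat) (p::nat \<Rightarrow> real) (x::nat \<Rightarrow> real).
            (\<forall>i\<in>{1..n}. 0 \<le> p i \<and> x i \<in> {m..M}) \<and> (\<Sum>i=1..n. p i) = 1
            \<longrightarrow> \<bar>disc_central_moment 3 n p x\<bar> \<le> (M - m) ^ 3 / (6 * sqrt 3))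
       \<and> (\<forall>f::real \<Rightarrow> real.
            (\<forall>t\<in>{m..M}. 0 \<le> f t) \<and> f integrable_on {m..M} \<and> integral {m..M} f = 1
            \<longrightarrow> \<bar>cont_central_moment 3 m M f\<bar> \<le> (M - m) ^ 3 / (6 * sqrt 3))"
proof (intro conjI allI impI)
  fix n and p x :: "nat \<Rightarrow> real"
  assume h: "(\<forall>i\<in>{1..n}. 0 \<le> p i \<and> x i \<in> {m..M}) \<and> (\<Sum>i=1..n. p i) = 1"
  define e1 where "e1 = (\<Sum>i=1..n. p i * x i)"
  define e2 where "e2 = (\<Sum>i=1..n. p i * x i^2)"
  define e3 where "e3 = (\<Sum>i=1..n. p i * x i^3)"
  have lin: "(\<Sum>i=1..n. p i * (a * x i^3 + b * x i^2 + c * x i + k)) = a * e3 + b * e2 + c * e1 + k"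
    for a b c k using h disc_lin[of p a x b c k n] by (simp add: e1_def e2_def e3_def)
  have "\<bar>e3 - 3 * e1 * e2 + 2 * e1^3\<bar> \<le> (M - m)^3/(6 * sqrt 3)"
  proof (rule abstract_bound[OF assms])
    fix a b c k :: real
    assume q: "\<And>t. m \<le> t \<Longrightarrow> t \<le> M \<Longrightarrow> 0 \<le> a * t^3 + b * t^2 + c * t + k"
    have "0 \<le> (\<Sum>i=1..n. p i * (a * x i^3 + b * x i^2 + c * x i + k))"
      using h q by (intro sum_nonneg mult_nonneg_nonneg) auto
    thus "0 \<le> a * e3 + b * e2 + c * e1 + k" using lin by simp
  qed
  moreover have "disc_central_moment 3 n p x = e3 - 3 * e1 * e2 + 2 * e1^3"
  proof -
    have mu: "disc_mean n p x = e1" by (simp add: disc_mean_def e1_def)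
    have "disc_central_moment 3 n p x =
        (\<Sum>i=1..n. p i * (1 * x i^3 + (-3 * e1) * x i^2 + (3 * e1^2) * x i + (-(e1^3))))"
      unfolding disc_central_moment_def mu
      by (rule sum.cong) (simp_all add: algebra_simps power2_eq_square power3_eq_cube)
    also have "\<dots> = e3 - 3 * e1 * e2 + 2 * e1^3" unfolding lin
      by (simp add: algebra_simps power2_eq_square power3_eq_cube)
    finally show ?thesis .
  qed
  ultimately show "\<bar>disc_central_moment 3 n p x\<bar> \<le> (M - m) ^ 3 / (6 * sqrt 3)" by simp
next
  fix f :: "real \<Rightarrow> real"
  assume h: "(\<forall>t\<in>{m..M}. 0 \<le> f t) \<and> f integrable_on {m..M} \<and> integral {m..M} f = 1"
  hence fi: "f integrable_on {m..M}" and fp: "\<forall>t\<in>{m..M}. 0 \<le> f t" and f1: "integral {m..M} f = 1"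
    by auto
  define e1 where "e1 = integral {m..M} (\<lambda>t. t * f t)"
  define e2 where "e2 = integral {m..M} (\<lambda>t. t^2 * f t)"
  define e3 where "e3 = integral {m..M} (\<lambda>t. t^3 * f t)"
  have lin: "integral {m..M} (\<lambda>t. (a * t^3 + b * t^2 + c * t + k) * f t) = a * e3 + b * e2 + c * e1 + k"
    for a b c k using cont_lin[OF fi fp, of a b c k] f1 by (simp add: e1_def e2_def e3_def)
  have "\<bar>e3 - 3 * e1 * e2 + 2 * e1^3\<bar> \<le> (M - m)^3/(6 * sqrt 3)"
  proof (rule abstract_bound[OF assms])
    fix a b c k :: real
    assume q: "\<And>t. m \<le> t \<Longrightarrow> t \<le> M \<Longrightarrow> 0 \<le> a * t^3 + b * t^2 + c * t + k"
    have "0 \<le> integral {m..M} (\<lambda>t. (a * t^3 + b * t^2 + c * t + k) * f t)"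
    proof (rule integral_nonneg)
      show "(\<lambda>t. (a * t^3 + b * t^2 + c * t + k) * f t) integrable_on {m..M}"
        by (rule cont_integrable[OF fi fp]) (intro continuous_intros)
    qed (use q fp in auto)
    thus "0 \<le> a * e3 + b * e2 + c * e1 + k" using lin by simp
  qed
  moreover have "cont_central_moment 3 m M f = e3 - 3 * e1 * e2 + 2 * e1^3"
  proof -
    have mu: "cont_mean m M f = e1" by (simp add: cont_mean_def e1_def)
    have "(\<lambda>t. (t - e1)^3 * f t) = (\<lambda>t. (1 * t^3 + (-3 * e1) * t^2 + (3 * e1^2) * t + (-(e1^3))) * f t)"
      by (rule ext) (simp add: algebra_simps power2_eq_square power3_eq_cube)
    hence "cont_central_moment 3 m M f =
        integral {m..M} (\<lambda>t. (1 * t^3 + (-3 * e1) * t^2 + (3 * e1^2) * t + (-(e1^3))) * f t)"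
      unfolding cont_central_moment_def mu by simp
    also have "\<dots> = e3 - 3 * e1 * e2 + 2 * e1^3" unfolding lin
      by (simp add: algebra_simps power2_eq_square power3_eq_cube)
    finally show ?thesis .
  qed
  ultimately show "\<bar>cont_central_moment 3 m M f\<bar> \<le> (M - m) ^ 3 / (6 * sqrt 3)" by simp
qed

end
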